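(* Let $n\ge1$ and let $\mathcal A,\mathcal S$ be subsets of $\{E_{ij}:1\le i,j\le n\}$, with associated digraphs $\mathcal G_{\mathcal A}$, $\mathcal G_{\mathcal S}$ on $\{1,\dots,n\}$ (arc $(i,j)$ iff $E_{ij}$ belongs to the set; arcs $(i,i)$ are self-loops). Suppose (i) each weakly connected component of $\mathcal G_{\mathcal S}$ is strongly connected with at least two nodes; (ii) the union digraph $\mathcal G_{\mathcal A}\cup\mathcal G_{\mathcal S}$ is strongly connected and has at least one self-loop. Then there exists $A\in\Sigma_{\rm r}(\mathcal A)$ such that the real Lie algebra generated by $\{A\}\cup\mathcal S$ equals $\mathfrak{gl}(n)$.
   Context: $E_{ij}$ is the $n\times n$ matrix unit; $\mathfrak{gl}(n)$ is the Lie algebra of real $n\times n$ matrices with commutator bracket. For $\mathcal A=\{g_1,\dots,g_k\}$, $\Sigma_{\rm r}(\mathcal A)=\{\sum_s l_sg_s: l_s\in\mathbb R,\ l_s\ne0\text{ for all }s\}$. Weakly connected component: connected component ignoring arc directions; strongly connected: all nodes mutually reachable via directed paths. *)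

theory Defs
  imports "HOL-Analysis.Analysis"
begin

text \<open>Matrices in gl(n) are real n x n matrices, with n = CARD('n) for a finite index type 'n.\<close>

definition mat_unit :: "'n::finite \<Rightarrow> 'n \<Rightarrow> real^'n^'n" where
  "mat_unit i j = (\<chi> k l. if k = i \<and> l = j then 1 else 0)"

definition lie_bracket :: "real^'n::finite^'n \<Rightarrow> real^'n^'n \<Rightarrow> real^'n^'n" where
  "lie_bracket X Y = X ** Y - Y ** X"

definition lie_subalgebra :: "(real^'n::finite^'n) set \<Rightarrow> bool" where
  "lie_subalgebra L \<longleftrightarrow> subspace L \<and> (\<forall>X\<in>L. \<forall>Y\<in>L. lie_bracket X Y \<in> L)"

definition lie_generated :: "(real^'n::finite^'n) set \<Rightarrow> (real^'n^'n) set" where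
  "lie_generated G = \<Inter>{L. G \<subseteq> L \<and> lie_subalgebra L}"

definition units_of_arcs :: "('n::finite \<times> 'n) set \<Rightarrow> (real^'n^'n) set" where
  "units_of_arcs Ar = (\<lambda>(i,j). mat_unit i j) ` Ar"

text \<open>Sigma_r: linear combinations of all elements of the set with all coefficients nonzero.
  Elements of units_of_arcs Ar correspond bijectively to arcs in Ar.\<close>
definition sigma_r :: "('n::finite \<times> 'n) set \<Rightarrow> (real^'n^'n) set" where
  "sigma_r Ar = {(\<Sum>(i,j)\<in>Ar. l (i,j) *\<^sub>R mat_unit i j) | l. \<forall>a\<in>Ar. l a \<noteq> 0}"

definition weakly_reach :: "('n \<times> 'n) set \<Rightarrow> ('n \<times> 'n) set" where
  "weakly_reach G = (G \<union> G\<inverse>)\<^sup>*"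

definition strongly_connected_digraph :: "('n \<times> 'n) set \<Rightarrow> bool" where
  "strongly_connected_digraph G \<longleftrightarrow> (\<forall>i j. (i, j) \<in> G\<^sup>*)"

definition components_strong_nontrivial :: "('n \<times> 'n) set \<Rightarrow> bool" where
  "components_strong_nontrivial G \<longleftrightarrow>
     (\<forall>i j. (i, j) \<in> weakly_reach G \<longrightarrow> (i, j) \<in> G\<^sup>*) \<and>
     (\<forall>i. \<exists>j. j \<noteq> i \<and> (i, j) \<in> weakly_reach G)"

end

theory Submission
  imports Defs
begin


lemma mu_nth: "mat_unit i j $ u $ v = (if u = i \<and> v = j then 1 else 0)"
  by (simp add: mat_unit_def)

lemma if01_mult: "(if P then 1 else 0) * (x::real) = (if P then x else 0)"
   "(x::real) * (if P then 1 else 0) = (if P then x else 0)" by auto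

lemma mu_mult_left: "(mat_unit i j ** X) $ u $ v = (if u = i then X $ j $ v else 0)"
  by (simp add: matrix_matrix_mult_def mu_nth if01_mult)

lemma mu_mult_right: "(X ** mat_unit i j) $ u $ v = (if v = j then X $ u $ i else 0)"
  by (simp add: matrix_matrix_mult_def mu_nth if01_mult conj_commute)

lemma lb_nth: "lie_bracket X Y $ u $ v = (X ** Y) $ u $ v - (Y ** X) $ u $ v"
  by (simp add: lie_bracket_def)

lemma mu_mult: "mat_unit i j ** mat_unit k l = (if j = k then mat_unit i l else 0)"
  by (simp add: vec_eq_iff mu_mult_left mu_nth)

lemma mu_bracket: "lie_bracket (mat_unit i j) (mat_unit k l) =
   (if j = k then mat_unit i l else 0) - (if l = i then mat_unit k j else 0)"
  by (simp add: lie_bracket_def mu_mult)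

lemma Z_formula:
  assumes "a \<noteq> b" "s \<noteq> p"
  shows "lie_bracket (mat_unit p a) (lie_bracket X (mat_unit b s)) =
     X$a$b *\<^sub>R mat_unit p s + X$s$p *\<^sub>R mat_unit b a"
  using assms by (auto simp: vec_eq_iff lb_nth mu_mult_left mu_mult_right mu_nth)

lemma kill1:
  assumes "s \<noteq> k" "p \<noteq> b" "a \<noteq> k"
  shows "lie_bracket (mat_unit k p) (c *\<^sub>R mat_unit p s + d *\<^sub>R mat_unit b a) = c *\<^sub>R mat_unit k s"
  using assms by (auto simp: vec_eq_iff lb_nth mu_mult_left mu_mult_right mu_nth)

lemma diag_mult_left:
  assumes "\<And>u v. u \<noteq> v \<Longrightarrow> H$u$v = 0"
  shows "(H ** Y) $ u $ v = H$u$u * Y$u$v"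
proof -
  have "(H ** Y) $ u $ v = (\<Sum>w\<in>UNIV. H$u$w * Y$w$v)"
    by (simp add: matrix_matrix_mult_def)
  also have "\<dots> = (\<Sum>w\<in>UNIV. if w = u then H$u$u * Y$u$v else 0)"
    by (rule sum.cong) (auto simp: assms)
  finally show ?thesis by simp
qed

lemma diag_mult_right:
  assumes "\<And>u v. u \<noteq> v \<Longrightarrow> H$u$v = 0"
  shows "(Y ** H) $ u $ v = Y$u$v * H$v$v"
proof -
  have "(Y ** H) $ u $ v = (\<Sum>w\<in>UNIV. Y$u$w * H$w$v)"
    by (simp add: matrix_matrix_mult_def)
  also have "\<dots> = (\<Sum>w\<in>UNIV. if w = v then Y$u$v * H$v$v else 0)"
    by (rule sum.cong) (auto simp: assms)
  finally show ?thesis by simp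
qed

lemma diag_bracket:
  assumes "\<And>u v. u \<noteq> v \<Longrightarrow> H$u$v = 0"
  shows "lie_bracket H Y = (\<chi> u v. (H$u$u - H$v$v) * Y$u$v)"
  by (simp add: vec_eq_iff lb_nth diag_mult_left[OF assms] diag_mult_right[OF assms] algebra_simps)

lemma lsub: "lie_subalgebra L \<Longrightarrow> subspace L"
  by (simp add: lie_subalgebra_def)

lemma lbr: "lie_subalgebra L \<Longrightarrow> X \<in> L \<Longrightarrow> Y \<in> L \<Longrightarrow> lie_bracket X Y \<in> L"
  by (simp add: lie_subalgebra_def)

lemma lscale: "lie_subalgebra L \<Longrightarrow> X \<in> L \<Longrightarrow> c *\<^sub>R X \<in> L"
  by (simp add: lie_subalgebra_def subspace_scale)

lemma lunscale: "lie_subalgebra L \<Longrightarrow> c *\<^sub>R X \<in> L \<Longrightarrow> c \<noteq> 0 \<Longrightarrow> X \<in> L"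
  using lscale[of L "c *\<^sub>R X" "inverse c"] by simp

lemma ltrans: "lie_subalgebra L \<Longrightarrow> mat_unit x y \<in> L \<Longrightarrow> mat_unit y z \<in> L \<Longrightarrow> x \<noteq> z
   \<Longrightarrow> mat_unit x z \<in> L"
  using lbr[of L "mat_unit x y" "mat_unit y z"] by (simp add: mu_bracket)


lemma wr_sym: "(x,y) \<in> weakly_reach G \<Longrightarrow> (y,x) \<in> weakly_reach G"
proof -
  assume "(x,y) \<in> weakly_reach G"
  then have "(y,x) \<in> ((G \<union> G\<inverse>)\<inverse>)\<^sup>*" unfolding weakly_reach_def
    by (simp add: rtrancl_converseI)
  moreover have "(G \<union> G\<inverse>)\<inverse> = G \<union> G\<inverse>" by auto
  ultimately show ?thesis unfolding weakly_reach_def by simp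
qed

lemma wr_trans: "(x,y) \<in> weakly_reach G \<Longrightarrow> (y,z) \<in> weakly_reach G \<Longrightarrow> (x,z) \<in> weakly_reach G"
  unfolding weakly_reach_def by (rule rtrancl_trans)

lemma wr_base: "(x,y) \<in> G \<Longrightarrow> (x,y) \<in> weakly_reach G"
  unfolding weakly_reach_def by auto

lemma gs_in:
  assumes L: "lie_subalgebra L" and cs: "components_strong_nontrivial GS"
    and gsL: "\<And>x y. (x,y) \<in> GS \<Longrightarrow> mat_unit x y \<in> L"
    and xy: "(x,y) \<in> weakly_reach GS" "x \<noteq> y"
  shows "mat_unit x y \<in> L"
proof -
  have "(x,y) \<in> GS\<^sup>*" using cs xy unfolding components_strong_nontrivial_def by blast
  then have "(x,y) \<in> GS\<^sup>+" using xy(2) by (simp add: rtrancl_eq_or_trancl)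
  then show ?thesis using xy(2)
  proof (induction rule: trancl_induct)
    case (base y) then show ?case using gsL by simp
  next
    case (step k y)
    show ?case
    proof (cases "k = y")
      case True then show ?thesis using step by simp
    next
      case False
      show ?thesis
      proof (cases "x = k")
        case True then show ?thesis using step gsL by simp
      next
        case False
        then have "mat_unit x k \<in> L" using step by simp
        then show ?thesis using ltrans[OF L _ gsL[OF step(2)] step(4)] by simp
      qed
    qed
  qed
qed

lemma exit_arc:
  assumes "(x,y) \<in> R\<^sup>*" "x \<in> S" "y \<notin> S"
  shows "\<exists>a b. (a,b) \<in> R \<and> a \<in> S \<and> b \<notin> S"
  using assms
proof (induction rule: rtrancl_induct)
  case base then show ?case by simp
next
  case (step y z) then show ?case by blast
qed



lemma lb_add2: "lie_bracket X (Y + W) = lie_bracket X Y + lie_bracket X W"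
  by (simp add: vec_eq_iff lb_nth matrix_matrix_mult_def sum.distrib algebra_simps)

lemma lb_scale2: "lie_bracket X (c *\<^sub>R Y) = c *\<^sub>R lie_bracket X Y"
  by (simp add: vec_eq_iff lb_nth matrix_matrix_mult_def sum_distrib_left algebra_simps)

lemma diag_unit: "(\<And>u v. u \<noteq> v \<Longrightarrow> H$u$v = 0) \<Longrightarrow>
   lie_bracket H (mat_unit i j) = (H$i$i - H$j$j) *\<^sub>R mat_unit i j"
  by (auto simp: diag_bracket vec_eq_iff mu_nth)

lemma sep_step:
  assumes "\<And>u v. u \<noteq> v \<Longrightarrow> H$u$v = 0"
  shows "lie_bracket H (c *\<^sub>R mat_unit p s + d *\<^sub>R mat_unit b a) - (H$b$b - H$a$a) *\<^sub>R (c *\<^sub>R mat_unit p s + d *\<^sub>R mat_unit b a)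
     = (c * ((H$p$p - H$s$s) - (H$b$b - H$a$a))) *\<^sub>R mat_unit p s"
  by (simp add: lb_add2 lb_scale2 diag_unit[OF assms] algebra_simps)


lemma cs_ex: "components_strong_nontrivial G \<Longrightarrow> \<exists>j. j \<noteq> i \<and> (i,j) \<in> weakly_reach G"
  unfolding components_strong_nontrivial_def by simp

lemma core:
  fixes L :: "(real^'n::finite^'n) set" and GA GS :: "('n \<times> 'n) set"
  assumes L: "lie_subalgebra L" and cs: "components_strong_nontrivial GS"
    and sc: "strongly_connected_digraph (GA \<union> GS)"
    and gsL: "\<And>x y. (x,y) \<in> GS \<Longrightarrow> mat_unit x y \<in> L"
    and XL: "X \<in> L" and Xnz: "\<And>a b. (a,b) \<in> GA \<Longrightarrow> X$a$b \<noteq> 0"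
    and HL: "H \<in> L" and Hd: "\<And>u v. u \<noteq> v \<Longrightarrow> H$u$v = 0"
    and Hsep: "\<And>c d d'. d \<noteq> k0 \<Longrightarrow> d' \<noteq> k0 \<Longrightarrow> H$k0$k0 + H$c$c \<noteq> H$d$d + H$d'$d'"
    and yk: "y \<noteq> k0"
  shows "mat_unit k0 y \<in> L"
proof -
  define Out where "Out = {y. y = k0 \<or> mat_unit k0 y \<in> L}"
  have gs: "\<And>x y. (x,y) \<in> weakly_reach GS \<Longrightarrow> x \<noteq> y \<Longrightarrow> mat_unit x y \<in> L"
    using gs_in[OF L cs gsL] by blast
  have Eout: "w \<in> Out" if "z \<in> Out" "mat_unit z w \<in> L" "w \<noteq> k0" for z w
  proof (cases "z = k0")
    case True then show ?thesis using that Out_def by simp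
  next
    case False
    then have "mat_unit k0 z \<in> L" using that Out_def by simp
    then have "mat_unit k0 w \<in> L" using ltrans[OF L _ that(2)] that(3) by blast
    then show ?thesis using Out_def by simp
  qed
  have "Out = UNIV"
  proof (rule ccontr)
    assume "Out \<noteq> UNIV"
    then obtain y0 where y0: "y0 \<notin> Out" by auto
    have "(k0,y0) \<in> (GA \<union> GS)\<^sup>*" using sc unfolding strongly_connected_digraph_def by auto
    moreover have "k0 \<in> Out" by (simp add: Out_def)
    ultimately have "\<exists>a b. (a,b) \<in> GA \<union> GS \<and> a \<in> Out \<and> b \<notin> Out"
      using exit_arc[of k0 y0 "GA \<union> GS" Out] y0 by blast
    then obtain a b where ab: "(a,b) \<in> GA \<union> GS" "a \<in> Out" "b \<notin> Out" by blast
    have bk: "b \<noteq> k0" using ab Out_def by auto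
    have anb: "a \<noteq> b" using ab by auto
    have nwr: "(a,b) \<notin> weakly_reach GS"
    proof
      assume "(a,b) \<in> weakly_reach GS"
      then have "mat_unit a b \<in> L" using gs anb by simp
      then show False using Eout[OF ab(2) _ bk] ab(3) by blast
    qed
    then have abA: "(a,b) \<in> GA" using ab(1) wr_base[of a b GS] by blast
    obtain p where p: "p \<noteq> a" "(a,p) \<in> weakly_reach GS"
      using cs_ex[OF cs] by blast
    obtain s where s: "s \<noteq> b" "(b,s) \<in> weakly_reach GS"
      using cs_ex[OF cs] by blast
    have pb: "p \<noteq> b" using p(2) nwr by auto
    have sp: "s \<noteq> p"
    proof
      assume sp: "s = p"
      have "(s,b) \<in> weakly_reach GS" by (rule wr_sym[OF s(2)])
      then have "(p,b) \<in> weakly_reach GS" using sp by simp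
      then have "(a,b) \<in> weakly_reach GS" by (rule wr_trans[OF p(2)])
      then show False using nwr by simp
    qed
    have Epa: "mat_unit p a \<in> L" by (rule gs[OF wr_sym[OF p(2)] p(1)])
    have Eap: "mat_unit a p \<in> L" by (rule gs[OF p(2) not_sym[OF p(1)]])
    have Ebs: "mat_unit b s \<in> L" by (rule gs[OF s(2) not_sym[OF s(1)]])
    have Esb: "mat_unit s b \<in> L" by (rule gs[OF wr_sym[OF s(2)] s(1)])
    have sk: "s \<noteq> k0"
    proof
      assume "s = k0"
      then have "s \<in> Out" using Out_def by simp
      then have "b \<in> Out" using Eout[OF _ Esb bk] by simp
      then show False using ab by simp
    qed
    define Z where "Z = lie_bracket (mat_unit p a) (lie_bracket X (mat_unit b s))"
    have ZL: "Z \<in> L" unfolding Z_def using lbr[OF L] Epa XL Ebs by blast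
    have Zf: "Z = X$a$b *\<^sub>R mat_unit p s + X$s$p *\<^sub>R mat_unit b a"
      unfolding Z_def using Z_formula anb sp by blast
    have Xab: "X$a$b \<noteq> 0" using Xnz abA by blast
    have "s \<in> Out"
    proof (cases "k0 = a \<or> k0 = p")
      case True
      have "lie_bracket H Z - (H$b$b - H$a$a) *\<^sub>R Z \<in> L"
        using L ZL HL by (simp add: lbr lscale lsub subspace_diff)
      also have "lie_bracket H Z - (H$b$b - H$a$a) *\<^sub>R Z =
          (X$a$b * ((H$p$p - H$s$s) - (H$b$b - H$a$a))) *\<^sub>R mat_unit p s"
        unfolding Zf by (rule sep_step[OF Hd])
      finally have 1: "(X$a$b * ((H$p$p - H$s$s) - (H$b$b - H$a$a))) *\<^sub>R mat_unit p s \<in> L" .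
      have "H$p$p + H$a$a \<noteq> H$s$s + H$b$b"
      proof (cases "k0 = a")
        case True
        then show ?thesis using Hsep[OF sk bk, of p] by (simp add: add.commute)
      next
        case False
        then have "k0 = p" using \<open>k0 = a \<or> k0 = p\<close> by simp
        then show ?thesis using Hsep[OF sk bk, of a] by simp
      qed
      then have "X$a$b * ((H$p$p - H$s$s) - (H$b$b - H$a$a)) \<noteq> 0" using Xab by auto
      then have Eps: "mat_unit p s \<in> L" using lunscale[OF L 1] by blast
      have "p \<in> Out"
      proof (cases "p = k0")
        case True then show ?thesis using Out_def by simp
      next
        case False
        then have "a = k0" using True by simp
        then show ?thesis using Eout[OF _ Eap False] Out_def by simp
      qed
      then show ?thesis using Eout[OF _ Eps sk] by simp
    next
      case False
      then have "mat_unit k0 a \<in> L" using ab Out_def by auto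
      then have Ekp: "mat_unit k0 p \<in> L" using ltrans[OF L _ Eap] False by auto
      have "lie_bracket (mat_unit k0 p) Z = X$a$b *\<^sub>R mat_unit k0 s"
        unfolding Zf using kill1[OF sk pb, of a] False by auto
      then have "X$a$b *\<^sub>R mat_unit k0 s \<in> L" using lbr[OF L Ekp ZL] by simp
      then have "mat_unit k0 s \<in> L" using lunscale[OF L] Xab by blast
      then show ?thesis using Out_def by simp
    qed
    then have "b \<in> Out" using Eout[OF _ Esb bk] by simp
    then show False using ab by simp
  qed
  then show ?thesis using yk Out_def by auto
qed


lemma sub_def2: "subspace S \<longleftrightarrow> 0 \<in> S \<and> (\<forall>x\<in>S. \<forall>y\<in>S. x + y \<in> S) \<and> (\<forall>c. \<forall>x\<in>S. c *\<^sub>R x \<in> S)"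
  by (simp add: subspace_def)

lemma tr_neg: "transpose (- A) = - transpose (A::real^'n::finite^'n)"
  by (simp add: transpose_def vec_eq_iff)

lemma tr_add: "transpose (A + B) = transpose A + transpose (B::real^'n::finite^'n)"
  by (simp add: transpose_def vec_eq_iff)

lemma tr_diff: "transpose (A - B) = transpose A - transpose (B::real^'n::finite^'n)"
  by (simp add: transpose_def vec_eq_iff)

lemma neg_mult: "(- A) ** (- B) = A ** (B::real^'n::finite^'n)"
  by (simp add: matrix_matrix_mult_def vec_eq_iff)

lemma tr_unit: "transpose (mat_unit i j) = mat_unit j i"
  by (auto simp: transpose_def vec_eq_iff mu_nth)

lemma tmem: "M \<in> (\<lambda>M. - transpose M) ` L \<longleftrightarrow> - transpose M \<in> (L::(real^'n::finite^'n) set)"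
proof
  assume "M \<in> (\<lambda>M. - transpose M) ` L"
  then obtain N where "N \<in> L" "M = - transpose N" by blast
  then show "- transpose M \<in> L" by (simp add: tr_neg)
next
  assume "- transpose M \<in> L"
  moreover have "M = - transpose (- transpose M)" by (simp add: tr_neg)
  ultimately show "M \<in> (\<lambda>M. - transpose M) ` L" by blast
qed

lemma tr_bracket: "- transpose (lie_bracket X Y) = lie_bracket (- transpose X) (- transpose (Y::real^'n::finite^'n))"
  by (simp add: lie_bracket_def matrix_transpose_mul neg_mult tr_diff)

lemma lie_transp:
  assumes L: "lie_subalgebra (L::(real^'n::finite^'n) set)"
  shows "lie_subalgebra ((\<lambda>M. - transpose M) ` L)"
proof -
  have sL: "subspace L" using L lsub by blast
  have "subspace ((\<lambda>M. - transpose M) ` L)"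
    unfolding sub_def2 Ball_def tmem
  proof (intro conjI allI impI)
    have "- transpose 0 = (0::real^'n^'n)" by (simp add: transpose_def vec_eq_iff)
    then show "- transpose 0 \<in> L" using subspace_0[OF sL] by simp
  next
    fix x y assume "- transpose x \<in> L" "- transpose y \<in> L"
    then have "- transpose x + - transpose y \<in> L" using subspace_add[OF sL] by blast
    then show "- transpose (x + y) \<in> L" by (simp add: tr_add)
  next
    fix c x assume "- transpose x \<in> L"
    then have "c *\<^sub>R (- transpose x) \<in> L" using subspace_scale[OF sL] by blast
    then show "- transpose (c *\<^sub>R x) \<in> L" by (simp add: transpose_scalar)
  qed
  moreover have "\<forall>X\<in>(\<lambda>M. - transpose M) ` L. \<forall>Y\<in>(\<lambda>M. - transpose M) ` L.
      lie_bracket X Y \<in> (\<lambda>M. - transpose M) ` L"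
    unfolding Ball_def tmem tr_bracket using lbr[OF L] by blast
  ultimately show ?thesis unfolding lie_subalgebra_def by blast
qed

lemma wr_conv: "weakly_reach (G\<inverse>) = weakly_reach G"
proof -
  have "G\<inverse> \<union> (G\<inverse>)\<inverse> = G \<union> G\<inverse>" by auto
  then show ?thesis unfolding weakly_reach_def by simp
qed

lemma cs_conv: "components_strong_nontrivial G \<Longrightarrow> components_strong_nontrivial (G\<inverse>)"
proof -
  assume h: "components_strong_nontrivial G"
  have 1: "(i, j) \<in> (G\<inverse>)\<^sup>*" if "(i, j) \<in> weakly_reach G" for i j
  proof -
    have "(j, i) \<in> weakly_reach G" by (rule wr_sym[OF that])
    then have "(j, i) \<in> G\<^sup>*" using h unfolding components_strong_nontrivial_def by blast
    then show ?thesis by (rule rtrancl_converseI)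
  qed
  show ?thesis using h 1 unfolding components_strong_nontrivial_def wr_conv by blast
qed

lemma sc_conv: "strongly_connected_digraph (GA \<union> GS) \<Longrightarrow> strongly_connected_digraph (GA\<inverse> \<union> GS\<inverse>)"
proof -
  assume a: "strongly_connected_digraph (GA \<union> GS)"
  have "GA\<inverse> \<union> GS\<inverse> = (GA \<union> GS)\<inverse>" by auto
  then show ?thesis using a unfolding strongly_connected_digraph_def
    by (simp add: rtrancl_converse)
qed

lemma decomp: "M = (\<Sum>q\<in>UNIV. M$fst q$snd q *\<^sub>R mat_unit (fst q) (snd q))"
proof -
  have e: "(\<Sum>q\<in>UNIV. M$fst q$snd q * mat_unit (fst q) (snd q) $u$v) = M$u$v" for u v
  proof -
    have "(\<Sum>q\<in>UNIV. M$fst q$snd q * mat_unit (fst q) (snd q) $u$v)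
        = (\<Sum>q\<in>UNIV. if q = (u,v) then M$u$v else 0)"
      by (rule sum.cong) (auto simp: mu_nth)
    then show ?thesis by simp
  qed
  have c: "M$u$v = (\<Sum>q\<in>UNIV. M$fst q$snd q *\<^sub>R mat_unit (fst q) (snd q))$u$v" for u v
    using e[of u v] by (simp only: sum_component vector_scaleR_component real_scaleR_def)
  show ?thesis by (intro iffD2[OF vec_eq_iff] allI c)
qed

definition scm :: "('n::finite \<Rightarrow> 'n \<Rightarrow> real) \<Rightarrow> real^'n^'n \<Rightarrow> real^'n^'n" where
  "scm f Y = (\<chi> u v. f u v * Y$u$v)"

lemma scm_nth: "scm f Y $ u $ v = f u v * Y$u$v"
  by (simp add: scm_def)

lemma diag_proj:
  fixes L :: "(real^'n::finite^'n) set"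
  assumes L: "lie_subalgebra L" and XL: "X \<in> L" and m: "\<And>x. m x \<noteq> x"
    and mL: "\<And>x. mat_unit x x - mat_unit (m x) (m x) \<in> L"
  shows "(\<chi> u v. if u = v then X$u$v else 0) \<in> L"
proof -
  define g where "g x w = (if w = x then 1 else 0) - (if w = m x then 1 else (0::real))" for x w
  have Hd: "(mat_unit x x - mat_unit (m x) (m x))$u$v = 0" if "u \<noteq> v" for x u v
    using that by (auto simp: mu_nth)
  have Hdiag: "(mat_unit x x - mat_unit (m x) (m x))$w$w = g x w" for x w
    by (simp add: mu_nth g_def)
  have step: "scm (\<lambda>u v. g x u - g x v - \<mu>) Y \<in> L" if Y: "Y \<in> L" for x \<mu> Y
  proof -
    have "lie_bracket (mat_unit x x - mat_unit (m x) (m x)) Y - \<mu> *\<^sub>R Y \<in> L"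
      using L Y mL by (simp add: lbr lscale lsub subspace_diff)
    moreover have "lie_bracket (mat_unit x x - mat_unit (m x) (m x)) Y - \<mu> *\<^sub>R Y
        = scm (\<lambda>u v. g x u - g x v - \<mu>) Y"
    proof -
      have br: "lie_bracket (mat_unit x x - mat_unit (m x) (m x)) Y =
        (\<chi> u v. ((mat_unit x x - mat_unit (m x) (m x))$u$u - (mat_unit x x - mat_unit (m x) (m x))$v$v) * Y$u$v)"
        by (rule diag_bracket) (rule Hd)
      show ?thesis unfolding br Hdiag by (simp add: vec_eq_iff scm_nth algebra_simps)
    qed
    ultimately show ?thesis by simp
  qed
  define F where "F P u v = (\<Prod>q\<in>P. g (fst q) u - g (fst q) v - (g (fst q) (fst q) - g (fst q) (snd q)))"
    for P :: "('n \<times> 'n) set" and u v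
  have prodL: "scm (F P) X \<in> L" if "finite P" for P
    using that
  proof (induction P rule: finite_induct)
    case empty
    have "scm (F {}) X = X" by (simp add: vec_eq_iff scm_nth F_def)
    then show ?case using XL by simp
  next
    case (insert q P)
    have "scm (F (insert q P)) X = scm (\<lambda>u v. g (fst q) u - g (fst q) v - (g (fst q) (fst q) - g (fst q) (snd q))) (scm (F P) X)"
      using insert(1,2) by (simp add: vec_eq_iff scm_nth F_def mult.assoc)
    then show ?case using step[OF insert(3)] by simp
  qed
  define P where "P = {q::'n\<times>'n. fst q \<noteq> snd q}"
  define c where "c = (\<Prod>q\<in>P. - (g (fst q) (fst q) - g (fst q) (snd q)))"
  have Fd: "F P u v = (if u = v then c else 0)" for u v
  proof (cases "u = v")
    case True
    then show ?thesis unfolding F_def c_def by simp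
  next
    case False
    then have "(u,v) \<in> P" by (simp add: P_def)
    moreover have "g (fst (u,v)) u - g (fst (u,v)) v - (g (fst (u,v)) (fst (u,v)) - g (fst (u,v)) (snd (u,v))) = 0"
      by simp
    ultimately have "F P u v = 0" unfolding F_def
      by (intro prod_zero) (simp, rule bexI[of _ "(u,v)"], auto)
    then show ?thesis using False by simp
  qed
  have fac: "g (fst q) (fst q) - g (fst q) (snd q) \<noteq> 0" if "q \<in> P" for q
  proof -
    have "fst q \<noteq> snd q" using that by (simp add: P_def)
    then show ?thesis using m[of "fst q"] by (auto simp: g_def)
  qed
  have cnz: "c \<noteq> 0" unfolding c_def using fac by (simp add: prod_zero_iff) (metis)
  have "scm (F P) X = c *\<^sub>R (\<chi> u v. if u = v then X$u$v else 0)"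
    by (simp add: vec_eq_iff scm_nth Fd)
  then show ?thesis using prodL[of P] lunscale[OF L _ cnz] by simp
qed


lemma diag_sum_nth: "(\<Sum>x\<in>UNIV. h x * mat_unit x x $ u $ v) = (if u = v then h u else (0::real))"
proof -
  have "(\<Sum>x\<in>UNIV. h x * mat_unit x x $ u $ v) = (\<Sum>x\<in>UNIV. if x = u then (if u = v then h u else 0) else 0)"
    by (rule sum.cong) (auto simp: mu_nth)
  then show ?thesis by simp
qed

lemma main_L:
  fixes L :: "(real^'n::finite^'n) set" and GA GS :: "('n \<times> 'n) set"
  assumes L: "lie_subalgebra L" and cs: "components_strong_nontrivial GS"
    and sc: "strongly_connected_digraph (GA \<union> GS)"
    and gsL: "\<And>x y. (x,y) \<in> GS \<Longrightarrow> mat_unit x y \<in> L"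
    and XL: "X \<in> L" and Xnz: "\<And>a b. (a,b) \<in> GA \<Longrightarrow> X$a$b \<noteq> 0"
    and HL: "H \<in> L" and Hd: "\<And>u v. u \<noteq> v \<Longrightarrow> H$u$v = 0"
    and Hsep: "\<And>c d d'. d \<noteq> k0 \<Longrightarrow> d' \<noteq> k0 \<Longrightarrow> H$k0$k0 + H$c$c \<noteq> H$d$d + H$d'$d'"
    and Htr: "(\<Sum>x\<in>UNIV. H$x$x) \<noteq> 0"
  shows "M \<in> L"
proof -
  have sL: "subspace L" using L by (rule lsub)
  have out: "mat_unit k0 y \<in> L" if "y \<noteq> k0" for y
    using core[OF L cs sc gsL XL Xnz HL Hd Hsep that] by blast
  define L' where "L' = (\<lambda>M. - transpose M) ` L"
  have L': "lie_subalgebra L'" unfolding L'_def by (rule lie_transp[OF L])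
  have gsL': "mat_unit x y \<in> L'" if "(x,y) \<in> GS\<inverse>" for x y
  proof -
    have "mat_unit y x \<in> L" using gsL that by simp
    then have "- mat_unit y x \<in> L" by (rule subspace_neg[OF sL])
    then show ?thesis unfolding L'_def tmem tr_unit .
  qed
  have XL': "- transpose X \<in> L'" unfolding L'_def tmem by (simp add: tr_neg XL)
  have Xnz': "(- transpose X)$a$b \<noteq> 0" if "(a,b) \<in> GA\<inverse>" for a b
    using Xnz[of b a] that by (simp add: transpose_def)
  have HL': "- transpose H \<in> L'" unfolding L'_def tmem by (simp add: tr_neg HL)
  have Hd': "(- transpose H)$u$v = 0" if "u \<noteq> v" for u v
    using Hd[of v u] that by (simp add: transpose_def)
  have Hsep': "(- transpose H)$k0$k0 + (- transpose H)$c$c \<noteq> (- transpose H)$d$d + (- transpose H)$d'$d'"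
    if "d \<noteq> k0" "d' \<noteq> k0" for c d d'
  proof
    assume "(- transpose H)$k0$k0 + (- transpose H)$c$c = (- transpose H)$d$d + (- transpose H)$d'$d'"
    then have "H$k0$k0 + H$c$c = H$d$d + H$d'$d'" by (simp add: transpose_def)
    then show False using Hsep[OF that] by simp
  qed
  have inn: "mat_unit y k0 \<in> L" if "y \<noteq> k0" for y
  proof -
    have "mat_unit k0 y \<in> L'"
      using core[OF L' cs_conv[OF cs] sc_conv[OF sc] gsL' XL' Xnz' HL' Hd' Hsep' that] by blast
    then have "- mat_unit y k0 \<in> L" unfolding L'_def tmem tr_unit .
    then have "- (- mat_unit y k0) \<in> L" by (rule subspace_neg[OF sL])
    then show ?thesis by simp
  qed
  have off: "mat_unit x y \<in> L" if "x \<noteq> y" for x y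
  proof (cases "x = k0")
    case True then show ?thesis using out that by simp
  next
    case False
    show ?thesis
    proof (cases "y = k0")
      case True then show ?thesis using inn False by simp
    next
      case False2: False
      show ?thesis by (rule ltrans[OF L inn[OF False] out[OF False2] that])
    qed
  qed
  have dd: "mat_unit x x - mat_unit k0 k0 \<in> L" for x
  proof (cases "x = k0")
    case True then show ?thesis using subspace_0[OF sL] by simp
  next
    case False
    have "lie_bracket (mat_unit x k0) (mat_unit k0 x) \<in> L"
      using lbr[OF L off off] False by auto
    then show ?thesis using False by (simp add: mu_bracket)
  qed
  define h where "h x = H$x$x" for x
  have eq: "H - (\<Sum>x\<in>UNIV. h x *\<^sub>R (mat_unit x x - mat_unit k0 k0)) = (\<Sum>x\<in>UNIV. h x) *\<^sub>R mat_unit k0 k0"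
  proof -
    have "(H - (\<Sum>x\<in>UNIV. h x *\<^sub>R (mat_unit x x - mat_unit k0 k0)))$u$v = ((\<Sum>x\<in>UNIV. h x) *\<^sub>R mat_unit k0 k0)$u$v"
      for u v
    proof -
      have "(\<Sum>x\<in>UNIV. h x *\<^sub>R (mat_unit x x - mat_unit k0 k0))$u$v
          = (\<Sum>x\<in>UNIV. h x * mat_unit x x $u$v) - (\<Sum>x\<in>UNIV. h x) * mat_unit k0 k0 $u$v"
        by (simp add: right_diff_distrib sum_subtractf sum_distrib_right)
      also have "\<dots> = (if u = v then h u else 0) - (\<Sum>x\<in>UNIV. h x) * mat_unit k0 k0 $u$v"
        by (simp only: diag_sum_nth)
      finally show ?thesis using Hd[of u v] by (cases "u = v") (auto simp: h_def)
    qed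
    then show ?thesis by (simp add: vec_eq_iff)
  qed
  have "H - (\<Sum>x\<in>UNIV. h x *\<^sub>R (mat_unit x x - mat_unit k0 k0)) \<in> L"
    by (rule subspace_diff[OF sL HL], rule subspace_sum[OF sL], rule lscale[OF L dd])
  then have "(\<Sum>x\<in>UNIV. h x) *\<^sub>R mat_unit k0 k0 \<in> L" unfolding eq .
  then have kk: "mat_unit k0 k0 \<in> L" using lunscale[OF L] Htr h_def by auto
  have all: "mat_unit x y \<in> L" for x y
  proof (cases "x = y")
    case True
    have "(mat_unit x x - mat_unit k0 k0) + mat_unit k0 k0 \<in> L"
      by (rule subspace_add[OF sL dd kk])
    then show ?thesis using True by simp
  next
    case False then show ?thesis by (rule off)
  qed
  have "(\<Sum>q\<in>UNIV. M$fst q$snd q *\<^sub>R mat_unit (fst q) (snd q)) \<in> L"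
    using all by (intro subspace_sum[OF sL] lscale[OF L])
  then show ?thesis using decomp[of M] by simp
qed


theorem lemma9:
  fixes GA GS :: "('n::finite \<times> 'n) set"
  assumes "components_strong_nontrivial GS"
    and "strongly_connected_digraph (GA \<union> GS)"
    and "\<exists>i. (i, i) \<in> GA \<union> GS"
  shows "\<exists>A \<in> sigma_r GA. lie_generated (insert A (units_of_arcs GS)) = UNIV"
proof -
  note cs = assms(1) and sc = assms(2)
  obtain k0 where k0: "(k0,k0) \<in> GA \<union> GS" using assms(3) by blast
  define l where "l = (\<lambda>q::'n\<times>'n. if q = (k0,k0) then (3::real) else 1)"
  define A where "A = (\<Sum>(i,j)\<in>GA. l (i,j) *\<^sub>R mat_unit i j)"
  have Asig: "A \<in> sigma_r GA"
  proof -
    have "\<forall>a\<in>GA. l a \<noteq> 0" by (simp add: l_def)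
    then show ?thesis unfolding sigma_r_def A_def by blast
  qed
  have A2: "A = (\<Sum>q\<in>GA. l q *\<^sub>R mat_unit (fst q) (snd q))"
    by (simp add: A_def case_prod_unfold)
  have Aent: "A$u$v = (if (u,v) \<in> GA then l (u,v) else 0)" for u v
  proof -
    have "A$u$v = (\<Sum>q\<in>GA. l q * mat_unit (fst q) (snd q) $u$v)"
      unfolding A2 by simp
    also have "\<dots> = (\<Sum>q\<in>GA. if q = (u,v) then l (u,v) else 0)"
      by (rule sum.cong) (auto simp: mu_nth)
    finally show ?thesis by simp
  qed
  have "lie_generated (insert A (units_of_arcs GS)) = UNIV"
  proof -
    have "M \<in> L" if "L \<in> {L. insert A (units_of_arcs GS) \<subseteq> L \<and> lie_subalgebra L}" for M L
    proof -
      have L: "lie_subalgebra L" and AL: "A \<in> L" and uL: "units_of_arcs GS \<subseteq> L"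
        using that by auto
      have gsL: "mat_unit x y \<in> L" if "(x,y) \<in> GS" for x y
        using uL that unfolding units_of_arcs_def by force
      have sL: "subspace L" using L by (rule lsub)
      have Anz: "A$a$b \<noteq> 0" if "(a,b) \<in> GA" for a b
        using that by (simp add: Aent l_def)
      obtain H where HL: "H \<in> L" and Hd: "\<And>u v. u \<noteq> v \<Longrightarrow> H$u$v = 0"
        and Hsep: "\<And>c d d'. d \<noteq> k0 \<Longrightarrow> d' \<noteq> k0 \<Longrightarrow> H$k0$k0 + H$c$c \<noteq> H$d$d + H$d'$d'"
        and Htr: "(\<Sum>x\<in>UNIV. H$x$x) \<noteq> 0"
      proof (cases "(k0,k0) \<in> GS")
        case True
        show ?thesis
        proof (rule that[of "mat_unit k0 k0"])
          show "mat_unit k0 k0 \<in> L" using gsL True by simp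
          show "mat_unit k0 k0 $ u $ v = 0" if "u \<noteq> v" for u v using that by (auto simp: mu_nth)
          show "mat_unit k0 k0 $ k0 $ k0 + mat_unit k0 k0 $ c $ c \<noteq> mat_unit k0 k0 $ d $ d + mat_unit k0 k0 $ d' $ d'"
            if "d \<noteq> k0" "d' \<noteq> k0" for c d d' using that by (simp add: mu_nth)
          show "(\<Sum>x\<in>UNIV. mat_unit k0 k0 $ x $ x) \<noteq> 0" by (simp add: mu_nth)
        qed
      next
        case False
        then have kA: "(k0,k0) \<in> GA" using k0 by blast
        obtain m where m: "\<And>x. m x \<noteq> x \<and> (x, m x) \<in> weakly_reach GS"
          using cs_ex[OF cs] by metis
        have gs: "\<And>x y. (x,y) \<in> weakly_reach GS \<Longrightarrow> x \<noteq> y \<Longrightarrow> mat_unit x y \<in> L"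
          using gs_in[OF L cs gsL] by blast
        have mL: "mat_unit x x - mat_unit (m x) (m x) \<in> L" for x
        proof -
          have "mat_unit x (m x) \<in> L" using gs m[of x] by metis
          moreover have "mat_unit (m x) x \<in> L" using gs m[of x] wr_sym by metis
          ultimately have "lie_bracket (mat_unit x (m x)) (mat_unit (m x) x) \<in> L" by (rule lbr[OF L])
          then show ?thesis using m[of x] by (simp add: mu_bracket)
        qed
        define D where "D = (\<chi> u v. if u = v then A$u$v else 0)"
        have DL: "D \<in> L" unfolding D_def by (rule diag_proj[OF L AL]) (use m mL in auto)
        have Dd: "D$x$x = (if (x,x) \<in> GA then l (x,x) else 0)" for x by (simp add: D_def Aent)
        have Dnn: "0 \<le> D$x$x" for x by (simp add: Dd l_def)
        have Dle: "D$x$x \<le> 1" if "x \<noteq> k0" for x using that by (simp add: Dd l_def)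
        have Dk: "D$k0$k0 = 3" using kA by (simp add: Dd l_def)
        show ?thesis
        proof (rule that[of D])
          show "D \<in> L" by (rule DL)
          show "D $ u $ v = 0" if "u \<noteq> v" for u v using that by (simp add: D_def)
          show "D $ k0 $ k0 + D $ c $ c \<noteq> D $ d $ d + D $ d' $ d'"
            if "d \<noteq> k0" "d' \<noteq> k0" for c d d'
            using Dk Dnn[of c] Dle[OF that(1)] Dle[OF that(2)] by linarith
          have "D$k0$k0 \<le> (\<Sum>x\<in>UNIV. D$x$x)"
            by (rule member_le_sum) (auto simp: Dnn)
          then show "(\<Sum>x\<in>UNIV. D $ x $ x) \<noteq> 0" using Dk by linarith
        qed
      qed
      show "M \<in> L" by (rule main_L[OF L cs sc gsL AL Anz HL Hd Hsep Htr])
    qed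
    then show ?thesis unfolding lie_generated_def by blast
  qed
  then show ?thesis using Asig by blast
qed

end
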